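(* Let $G$ be a finite, simple, undirected, connected graph with $n$ vertices and let $\ell$ be an integer with $2\leq\ell\leq n-1$. Then $\beta_\ell^s(G)=\ell+1$ if and only if $n=\ell+1$ or $G$ is isomorphic to the star $K_{1,\ell+1}$.
   Context: $d$ is the shortest-path distance; for nonempty $X\subseteq V(G)$, $d(s,X)=\min_{x\in X}d(s,x)$; for $S=\{s_1,\dots,s_k\}$, $\mathcal{D}_S(X)=(d(s_1,X),\dots,d(s_k,X))$. $S\subseteq V(G)$ is an $\ell$-solid-resolving set if $\mathcal{D}_S(X)\neq\mathcal{D}_S(Y)$ for all distinct nonempty $X,Y\subseteq V(G)$ with $|X|\leq\ell$ ($Y$ of arbitrary size). $\beta_\ell^s(G)$ is the minimum cardinality of an $\ell$-solid-resolving set of $G$. *)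

theory Defs
  imports Main
begin

definition simple_graph :: "'a set \<Rightarrow> ('a \<Rightarrow> 'a \<Rightarrow> bool) \<Rightarrow> bool" where
  "simple_graph V E \<longleftrightarrow> finite V \<and> (\<forall>x y. E x y \<longrightarrow> x \<in> V \<and> y \<in> V)
     \<and> (\<forall>x y. E x y \<longrightarrow> E y x) \<and> (\<forall>x. \<not> E x x)"

definition is_walk :: "'a set \<Rightarrow> ('a \<Rightarrow> 'a \<Rightarrow> bool) \<Rightarrow> 'a list \<Rightarrow> bool" where
  "is_walk V E xs \<longleftrightarrow> xs \<noteq> [] \<and> set xs \<subseteq> V \<and>
     (\<forall>i. Suc i < length xs \<longrightarrow> E (xs ! i) (xs ! Suc i))"

definition connected_graph :: "'a set \<Rightarrow> ('a \<Rightarrow> 'a \<Rightarrow> bool) \<Rightarrow> bool" where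
  "connected_graph V E \<longleftrightarrow> V \<noteq> {} \<and>
     (\<forall>u\<in>V. \<forall>v\<in>V. \<exists>xs. is_walk V E xs \<and> hd xs = u \<and> last xs = v)"

definition dist :: "'a set \<Rightarrow> ('a \<Rightarrow> 'a \<Rightarrow> bool) \<Rightarrow> 'a \<Rightarrow> 'a \<Rightarrow> nat" where
  "dist V E u v = (LEAST k. \<exists>xs. is_walk V E xs \<and> hd xs = u \<and> last xs = v \<and> length xs = Suc k)"

definition set_dist :: "'a set \<Rightarrow> ('a \<Rightarrow> 'a \<Rightarrow> bool) \<Rightarrow> 'a \<Rightarrow> 'a set \<Rightarrow> nat" where
  "set_dist V E s X = Min (dist V E s ` X)"

text \<open>The vectors D_S(X), D_S(Y) differ
iff some coordinate s \<in> S differs.\<close>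
definition solid_resolving :: "'a set \<Rightarrow> ('a \<Rightarrow> 'a \<Rightarrow> bool) \<Rightarrow> nat \<Rightarrow> 'a set \<Rightarrow> bool" where
  "solid_resolving V E l S \<longleftrightarrow> S \<subseteq> V \<and>
     (\<forall>X Y. X \<subseteq> V \<and> Y \<subseteq> V \<and> X \<noteq> {} \<and> Y \<noteq> {} \<and> card X \<le> l \<and> X \<noteq> Y \<longrightarrow>
        (\<exists>s\<in>S. set_dist V E s X \<noteq> set_dist V E s Y))"

definition solid_metric_dim :: "'a set \<Rightarrow> ('a \<Rightarrow> 'a \<Rightarrow> bool) \<Rightarrow> nat \<Rightarrow> nat" where
  "solid_metric_dim V E l = (LEAST k. \<exists>S. solid_resolving V E l S \<and> card S = k)"

definition graph_iso :: "'a set \<Rightarrow> ('a \<Rightarrow> 'a \<Rightarrow> bool) \<Rightarrow> 'b set \<Rightarrow> ('b \<Rightarrow> 'b \<Rightarrow> bool) \<Rightarrow> bool" where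
  "graph_iso V E W F \<longleftrightarrow> (\<exists>f. bij_betw f V W \<and> (\<forall>x\<in>V. \<forall>y\<in>V. E x y \<longleftrightarrow> F (f x) (f y)))"

definition star_vertices :: "nat \<Rightarrow> nat set" where
  "star_vertices m = {0..m}"

definition star_edge :: "nat \<Rightarrow> nat \<Rightarrow> nat \<Rightarrow> bool" where
  "star_edge m x y \<longleftrightarrow> x \<le> m \<and> y \<le> m \<and> ((x = 0 \<and> y \<noteq> 0) \<or> (y = 0 \<and> x \<noteq> 0))"

end

theory Submission
  imports Defs
begin

context
  fixes V :: "'a set" and E :: "'a \<Rightarrow> 'a \<Rightarrow> bool"
  assumes sg: "simple_graph V E" and cg: "connected_graph V E"
begin

lemma finV: "finite V" using sg unfolding simple_graph_def by blast
lemma EV: "E x y \<Longrightarrow> x \<in> V \<and> y \<in> V" using sg unfolding simple_graph_def by blast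
lemma Esym: "E x y \<Longrightarrow> E y x" using sg unfolding simple_graph_def by blast
lemma Eirr: "\<not> E x x" using sg unfolding simple_graph_def by blast

lemma walk_ex: "u \<in> V \<Longrightarrow> v \<in> V \<Longrightarrow> \<exists>xs. is_walk V E xs \<and> hd xs = u \<and> last xs = v"
  using cg unfolding connected_graph_def by blast

lemma dist_walk: assumes "u \<in> V" "v \<in> V"
  shows "\<exists>xs. is_walk V E xs \<and> hd xs = u \<and> last xs = v \<and> length xs = Suc (dist V E u v)"
proof -
  obtain xs where xs: "is_walk V E xs" "hd xs = u" "last xs = v" using walk_ex assms by blast
  then have "xs \<noteq> []" unfolding is_walk_def by blast
  then obtain k where "length xs = Suc k" by (cases xs) auto
  with xs have "\<exists>k xs. is_walk V E xs \<and> hd xs = u \<and> last xs = v \<and> length xs = Suc k" by blast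
  then show ?thesis unfolding dist_def by (rule LeastI_ex)
qed

lemma dist_le: assumes "is_walk V E xs" "hd xs = u" "last xs = v" "length xs = Suc k"
  shows "dist V E u v \<le> k"
  unfolding dist_def by (rule Least_le) (use assms in blast)

lemma dist_self: "x \<in> V \<Longrightarrow> dist V E x x = 0"
  using dist_le[of "[x]" x x 0] unfolding is_walk_def by auto

lemma dist_0: assumes "u \<in> V" "v \<in> V" "dist V E u v = 0" shows "u = v"
proof -
  obtain xs where xs: "hd xs = u" "last xs = v" "length xs = 1"
    using dist_walk[OF assms(1,2)] assms(3) by auto
  then obtain a where "xs = [a]" by (cases xs) auto
  with xs show ?thesis by simp
qed

lemma dist_pos: "u \<in> V \<Longrightarrow> v \<in> V \<Longrightarrow> u \<noteq> v \<Longrightarrow> dist V E u v \<ge> 1"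
  using dist_0 by fastforce

lemma dist_1: assumes "E x y" shows "dist V E x y = 1"
proof -
  have xy: "x \<in> V" "y \<in> V" "x \<noteq> y" using EV[OF assms] Eirr assms by auto
  have "is_walk V E [x, y]" unfolding is_walk_def using xy assms
    by (auto simp: less_Suc_eq)
  then have "dist V E x y \<le> 1" using dist_le[of "[x,y]" x y 1] by auto
  with dist_pos[OF xy] show ?thesis by simp
qed

lemma dist_1E: assumes "u \<in> V" "v \<in> V" "dist V E u v = 1" shows "E u v"
proof -
  obtain xs where xs: "is_walk V E xs" "hd xs = u" "last xs = v" "length xs = 2"
    using dist_walk[OF assms(1,2)] assms(3) by auto
  then obtain a b where ab: "xs = [a, b]"
    by (cases xs; cases "tl xs") auto
  from xs(1) have "E (xs ! 0) (xs ! Suc 0)" unfolding is_walk_def using xs(4) by auto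
  with xs ab show ?thesis by simp
qed

lemma nbr_ex: assumes "s \<in> V" "v \<in> V" "s \<noteq> v" shows "\<exists>t. E s t"
proof -
  obtain xs where xs: "is_walk V E xs" "hd xs = s" "last xs = v" "length xs = Suc (dist V E s v)"
    using dist_walk[OF assms(1,2)] by blast
  have "dist V E s v \<ge> 1" using dist_pos assms by blast
  then have "Suc 0 < length xs" using xs(4) by simp
  then have "E (xs ! 0) (xs ! Suc 0)" using xs(1) unfolding is_walk_def by blast
  moreover have "xs ! 0 = s" using xs(2) \<open>Suc 0 < length xs\<close> by (metis hd_conv_nth list.size(3) not_less0)
  ultimately show ?thesis by blast
qed

lemma sd_le: "X \<subseteq> V \<Longrightarrow> x \<in> X \<Longrightarrow> set_dist V E s X \<le> dist V E s x"
  unfolding set_dist_def using finV by (intro Min_le) (auto intro: finite_subset)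

lemma sd_ex: "X \<subseteq> V \<Longrightarrow> X \<noteq> {} \<Longrightarrow> \<exists>x\<in>X. set_dist V E s X = dist V E s x"
proof -
  assume a: "X \<subseteq> V" "X \<noteq> {}"
  have "set_dist V E s X \<in> dist V E s ` X" unfolding set_dist_def
    using a finV by (intro Min_in) (auto intro: finite_subset)
  then show ?thesis by auto
qed

lemma sd_0_iff: assumes "X \<subseteq> V" "X \<noteq> {}" "s \<in> V"
  shows "set_dist V E s X = 0 \<longleftrightarrow> s \<in> X"
proof
  assume "set_dist V E s X = 0"
  then obtain x where "x \<in> X" "dist V E s x = 0" using sd_ex[OF assms(1,2)] by metis
  then show "s \<in> X" using dist_0[of s x] assms by auto
next
  assume "s \<in> X"
  then show "set_dist V E s X = 0" using sd_le[OF assms(1) \<open>s \<in> X\<close>, of s] dist_self assms by auto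
qed

lemma sd_1: assumes "X \<subseteq> V" "s \<in> V" "s \<notin> X" "x \<in> X" "E s x"
  shows "set_dist V E s X = 1"
proof -
  have "set_dist V E s X \<le> 1" using sd_le[OF assms(1,4), of s] dist_1[OF assms(5)] by simp
  moreover have "set_dist V E s X \<noteq> 0" using sd_0_iff[of X s] assms by auto
  ultimately show ?thesis by simp
qed

lemma sd_1E: assumes "X \<subseteq> V" "X \<noteq> {}" "s \<in> V" "set_dist V E s X = 1"
  shows "\<exists>x\<in>X. E s x"
proof -
  obtain x where "x \<in> X" "dist V E s x = 1" using sd_ex[OF assms(1,2)] assms(4) by metis
  then show ?thesis using dist_1E[of s x] assms by auto
qed

lemma sd_insert: assumes "X \<subseteq> V" "X \<noteq> {}"
  shows "set_dist V E s (insert v X) = min (dist V E s v) (set_dist V E s X)"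
proof -
  have "finite X" using assms finV finite_subset by blast
  then show ?thesis unfolding set_dist_def using assms by (simp add: Min_insert)
qed

end


theorem mainTheorem6:
  fixes V :: "'a set" and E :: "'a \<Rightarrow> 'a \<Rightarrow> bool" and l :: nat
  assumes "simple_graph V E" and "connected_graph V E"
    and "2 \<le> l" and "l \<le> card V - 1"
  shows "solid_metric_dim V E l = l + 1 \<longleftrightarrow>
           (card V = l + 1 \<or> graph_iso V E (star_vertices (l + 1)) (star_edge (l + 1)))"
proof -
  note fin = finV[OF assms(1,2)]
  note EV = EV[OF assms(1,2)]
  note Eirr = Eirr[OF assms(1,2)]
  note Esym = Esym[OF assms(1,2)]
  note sd0 = sd_0_iff[OF assms(1,2)]
  note sd1 = sd_1[OF assms(1,2)]
  note sd1E = sd_1E[OF assms(1,2)]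
  note sdins = sd_insert[OF assms(1,2)]
  note sdle = sd_le[OF assms(1,2)]
  note d0 = dist_0[OF assms(1,2)]
  note d1 = dist_1[OF assms(1,2)]
  note dpos = dist_pos[OF assms(1,2)]
  note nbr = nbr_ex[OF assms(1,2)]
  have cV: "card V \<ge> l + 1" "card V \<ge> 3" using assms(3,4) by auto
  have lower: "l + 1 \<le> card S" if res: "solid_resolving V E l S" for S
  proof (rule ccontr)
    assume "\<not> l + 1 \<le> card S"
    then have cS: "card S \<le> l" by simp
    have SV: "S \<subseteq> V" using res unfolding solid_resolving_def by blast
    show False
    proof (cases "S = {}")
      case True
      have "V \<noteq> {}" using cV by auto
      then obtain x where x: "x \<in> V" by blast
      have "V \<noteq> {x}" using cV by auto
      then obtain y where y: "y \<in> V" "y \<noteq> x" using x by blast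
      have "{x} \<subseteq> V \<and> {y} \<subseteq> V \<and> {x} \<noteq> {} \<and> {y} \<noteq> {} \<and> card {x} \<le> l \<and> {x} \<noteq> {y}"
        using x y assms(3) by auto
      then have "\<exists>s\<in>S. set_dist V E s {x} \<noteq> set_dist V E s {y}"
        using res unfolding solid_resolving_def by blast
      then show False using True by blast
    next
      case False
      have "S \<noteq> V" using cS cV by auto
      then have "\<exists>s\<in>S. set_dist V E s S \<noteq> set_dist V E s V"
        using res False SV cS unfolding solid_resolving_def by blast
      then obtain s where "s \<in> S" "set_dist V E s S \<noteq> set_dist V E s V" by blast
      moreover have "set_dist V E s S = 0" using sd0[OF SV False] \<open>s \<in> S\<close> SV by blast
      moreover have "set_dist V E s V = 0" using sd0[of V s] \<open>s \<in> S\<close> SV cV by auto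
      ultimately show False by simp
    qed
  qed
  have Vres: "solid_resolving V E l V"
    unfolding solid_resolving_def
  proof (intro conjI allI impI)
    fix X Y assume h: "X \<subseteq> V \<and> Y \<subseteq> V \<and> X \<noteq> {} \<and> Y \<noteq> {} \<and> card X \<le> l \<and> X \<noteq> Y"
    then obtain s where s: "s \<in> X \<and> s \<notin> Y \<or> s \<in> Y \<and> s \<notin> X" by blast
    then have "s \<in> V" using h by blast
    then show "\<exists>s\<in>V. set_dist V E s X \<noteq> set_dist V E s Y"
      using sd0[of X s] sd0[of Y s] h s by metis
  qed simp
  have key: "solid_metric_dim V E l = l + 1 \<longleftrightarrow> (\<exists>S. solid_resolving V E l S \<and> card S = l + 1)"
  proof
    assume h: "solid_metric_dim V E l = l + 1"
    have "\<exists>S. solid_resolving V E l S \<and> card S = solid_metric_dim V E l"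
      unfolding solid_metric_dim_def by (rule LeastI_ex) (use Vres in blast)
    then show "\<exists>S. solid_resolving V E l S \<and> card S = l + 1" using h by simp
  next
    assume h: "\<exists>S. solid_resolving V E l S \<and> card S = l + 1"
    show "solid_metric_dim V E l = l + 1"
      unfolding solid_metric_dim_def
      by (rule Least_equality) (use h lower in auto)
  qed
  have dir2: "\<exists>S. solid_resolving V E l S \<and> card S = l + 1" if "card V = l + 1"
    using Vres that by blast
  have dir3: "\<exists>S. solid_resolving V E l S \<and> card S = l + 1"
    if iso: "graph_iso V E (star_vertices (l + 1)) (star_edge (l + 1))"
  proof -
    obtain f where bf: "bij_betw f V {0..l+1}"
      and ef: "\<forall>x\<in>V. \<forall>y\<in>V. E x y \<longleftrightarrow> star_edge (l+1) (f x) (f y)"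
      using iso unfolding graph_iso_def star_vertices_def by blast
    have "0 \<in> f ` V" using bf unfolding bij_betw_def by auto
    then obtain c where c: "c \<in> V" "f c = 0" by auto
    have cVeq: "card V = l + 2" using bij_betw_same_card[OF bf] by simp
    define S where "S = V - {c}"
    have cS: "card S = l + 1" unfolding S_def using cVeq c fin by simp
    have fnz: "f x \<noteq> 0" if "x \<in> V" "x \<noteq> c" for x
      using bf c that unfolding bij_betw_def inj_on_def by metis
    have frange: "f x \<le> l + 1" if "x \<in> V" for x using bf that unfolding bij_betw_def by auto
    have Esc: "E s c" if "s \<in> S" for s
      using ef that c fnz[of s] frange[of s] unfolding S_def star_edge_def by auto
    have nEss: "\<not> E s y" if "s \<in> S" "y \<in> S" for s y
      using ef that fnz unfolding S_def star_edge_def by auto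
    have "solid_resolving V E l S"
      unfolding solid_resolving_def
    proof (intro conjI allI impI)
      show "S \<subseteq> V" unfolding S_def by blast
      fix X Y assume h: "X \<subseteq> V \<and> Y \<subseteq> V \<and> X \<noteq> {} \<and> Y \<noteq> {} \<and> card X \<le> l \<and> X \<noteq> Y"
      show "\<exists>s\<in>S. set_dist V E s X \<noteq> set_dist V E s Y"
      proof (rule ccontr)
        assume "\<not> ?thesis"
        then have eq: "\<forall>s\<in>S. set_dist V E s X = set_dist V E s Y" by blast
        have mem: "s \<in> X \<longleftrightarrow> s \<in> Y" if "s \<in> S" for s
          using eq that sd0[of X s] sd0[of Y s] h unfolding S_def by auto
        have "\<not> S \<subseteq> X"
        proof
          assume "S \<subseteq> X"
          then have "card S \<le> card X" using fin h by (meson card_mono finite_subset)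
          then show False using cS h by simp
        qed
        then obtain s where s: "s \<in> S" "s \<notin> X" "s \<notin> Y" using mem by blast
        have sV: "s \<in> V" using s unfolding S_def by blast
        have "(c \<in> X \<and> c \<notin> Y) \<or> (c \<in> Y \<and> c \<notin> X)"
          using mem h unfolding S_def by blast
        then show False
        proof
          assume a: "c \<in> X \<and> c \<notin> Y"
          have "set_dist V E s X = 1" using sd1[of X s c] h s sV a Esc by blast
          then have "set_dist V E s Y = 1" using eq s by simp
          then obtain y where "y \<in> Y" "E s y" using sd1E[of Y s] h sV by blast
          moreover have "y \<in> S" using \<open>y \<in> Y\<close> a h unfolding S_def by blast
          ultimately show False using nEss s by blast
        next
          assume a: "c \<in> Y \<and> c \<notin> X"
          have "set_dist V E s Y = 1" using sd1[of Y s c] h s sV a Esc by blast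
          then have "set_dist V E s X = 1" using eq s by simp
          then obtain y where "y \<in> X" "E s y" using sd1E[of X s] h sV by blast
          moreover have "y \<in> S" using \<open>y \<in> X\<close> a h unfolding S_def by blast
          ultimately show False using nEss s by blast
        qed
      qed
    qed
    then show ?thesis using cS by blast
  qed
  have dir1: "card V = l + 1 \<or> graph_iso V E (star_vertices (l + 1)) (star_edge (l + 1))"
    if ex: "\<exists>S. solid_resolving V E l S \<and> card S = l + 1"
  proof (cases "card V = l + 1")
    case True then show ?thesis by blast
  next
    case False
    obtain S where res: "solid_resolving V E l S" and cS: "card S = l + 1" using ex by blast
    have SV: "S \<subseteq> V" using res unfolding solid_resolving_def by blast
    have finS: "finite S" using SV fin finite_subset by blast
    have "S \<noteq> V" using False cS by blast
    then obtain w where w: "w \<in> V" "w \<notin> S" using SV by blast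
    have hasnbr: "\<exists>t. E s t" if sV: "s \<in> V" for s
    proof -
      have "V \<noteq> {s}" using cV by auto
      then obtain v where "v \<in> V" "v \<noteq> s" using sV by blast
      then show ?thesis using nbr[of s v] sV by auto
    qed
    have indep: "\<not> E s t" if st: "s \<in> S" "t \<in> S" for s t
    proof
      assume est: "E s t"
      have "t \<noteq> s" using est Eirr by blast
      define X where "X = S - {s}"
      define Y where "Y = V - {s}"
      have cX: "card X = l" unfolding X_def using cS st finS by simp
      have XY: "X \<subseteq> V" "Y \<subseteq> V" "X \<noteq> {}" "Y \<noteq> {}" "X \<noteq> Y"
        using SV st \<open>t \<noteq> s\<close> w unfolding X_def Y_def by auto
      have "\<exists>r\<in>S. set_dist V E r X \<noteq> set_dist V E r Y"
        using res cX XY unfolding solid_resolving_def by (meson order_refl)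
      then obtain r where r: "r \<in> S" "set_dist V E r X \<noteq> set_dist V E r Y" by blast
      show False
      proof (cases "r = s")
        case True
        have sV: "s \<in> V" using st SV by blast
        have "set_dist V E s X = 1" using sd1[of X s t] XY st est \<open>t \<noteq> s\<close> sV unfolding X_def by blast
        moreover have "set_dist V E s Y = 1" using sd1[of Y s t] XY st est \<open>t \<noteq> s\<close> sV SV unfolding Y_def by blast
        ultimately show False using r True by simp
      next
        case False
        have "r \<in> X" "r \<in> Y" using r False SV unfolding X_def Y_def by auto
        then show False using r sd0[of X r] sd0[of Y r] XY by auto
      qed
    qed
    have lem: "dist V E s' v < dist V E s' u"
      if a: "s \<in> S" "s' \<in> S" "s \<noteq> s'" "u \<in> V" "u \<notin> S" "E s u" "v \<in> V" "v \<notin> S" "v \<noteq> u"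
      for s s' u v
    proof -
      define X where "X = insert u (S - {s, s'})"
      define Y where "Y = insert v X"
      have c2: "card (S - {s, s'}) = l - 1" using a cS finS by (simp add: card_Diff_subset)
      have cX: "card X = l" unfolding X_def using c2 a finS assms(3) by simp
      have XY: "X \<subseteq> V" "Y \<subseteq> V" "X \<noteq> {}" "Y \<noteq> {}" "X \<noteq> Y"
        using SV a unfolding X_def Y_def by auto
      have "\<exists>r\<in>S. set_dist V E r X \<noteq> set_dist V E r Y"
        using res cX XY unfolding solid_resolving_def by (meson order_refl)
      then obtain r where r: "r \<in> S" "set_dist V E r X \<noteq> set_dist V E r Y" by blast
      have Yeq: "set_dist V E r Y = min (dist V E r v) (set_dist V E r X)"
        unfolding Y_def using sdins XY by blast
      have rV: "r \<in> V" using r SV by blast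
      consider "r = s" | "r = s'" | "r \<in> X" using r unfolding X_def by blast
      then show ?thesis
      proof cases
        case 1
        have "set_dist V E s X = 1" using sd1[of X s u] XY a rV 1 unfolding X_def by blast
        moreover have "dist V E s v \<ge> 1" using dpos[of s v] a rV 1 by blast
        ultimately show ?thesis using r Yeq 1 by simp
      next
        case 2
        have "set_dist V E s' X \<le> dist V E s' u" using sdle[of X u s'] XY unfolding X_def by blast
        then show ?thesis using r Yeq 2 by (simp add: min_def split: if_splits)
      next
        case 3
        have "r \<in> Y" using 3 unfolding Y_def by blast
        then show ?thesis using r 3 sd0[of X r] sd0[of Y r] XY rV by auto
      qed
    qed
    have "S \<noteq> {}" using cS by auto
    then obtain s1 where s1: "s1 \<in> S" by blast
    obtain u where u: "E s1 u" using hasnbr s1 SV by blast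
    have uV: "u \<in> V" "u \<notin> S" using EV[OF u] indep[OF s1] u by auto
    have Tu: "v = u" if v: "v \<in> V" "v \<notin> S" for v
    proof (rule ccontr)
      assume vu: "v \<noteq> u"
      have "card (S - {s1}) = l" using cS s1 finS by simp
      then have "S - {s1} \<noteq> {}" using assms(3) by (metis card.empty not_numeral_le_zero)
      then obtain s2 where s2: "s2 \<in> S" "s2 \<noteq> s1" by blast
      have "card (S - {s1, s2}) = l - 1" using cS s1 s2 finS by (simp add: card_Diff_subset)
      then have "card (S - {s1, s2}) \<noteq> 0" using assms(3) by simp
      then have "S - {s1, s2} \<noteq> {}" by (metis card.empty)
      then obtain s3 where s3: "s3 \<in> S" "s3 \<noteq> s1" "s3 \<noteq> s2" by blast
      have l1: "dist V E s2 v < dist V E s2 u" using lem[of s1 s2 u v] s1 s2 uV u v vu by blast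
      obtain w where w: "E s2 w" using hasnbr s2 SV by blast
      have wV: "w \<in> V" "w \<notin> S" using EV[OF w] indep[OF s2(1)] w by auto
      show False
      proof (cases "w = u")
        case True
        then have "dist V E s2 u = 1" using d1 w by blast
        then have "dist V E s2 v = 0" using l1 by simp
        then have "s2 = v" using d0[of s2 v] s2 SV v by blast
        then show False using s2 v by blast
      next
        case False
        have "dist V E s3 u < dist V E s3 w" using lem[of s2 s3 w u] s2 s3 wV w uV False by auto
        moreover have "dist V E s3 w < dist V E s3 u" using lem[of s1 s3 u w] s1 s3 wV uV u False by auto
        ultimately show False by simp
      qed
    qed
    have Veq: "V = insert u S" using Tu SV uV by blast
    have adj: "E s u" if sS: "s \<in> S" for s
    proof -
      obtain t where t: "E s t" using hasnbr sS SV by blast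
      have "t \<in> V" "t \<notin> S" using EV[OF t] indep[OF sS] t by auto
      then show ?thesis using Tu t by blast
    qed
    have "card {1..l+1} = card S" using cS by simp
    then obtain g where g: "bij_betw g S {1..l+1}"
      using finite_same_card_bij[OF finS] by (metis finite_atLeastAtMost)
    define f where "f = g(u := 0)"
    have fS: "f x = g x" if "x \<in> S" for x using that uV unfolding f_def by auto
    have grange: "g x \<in> {1..l+1}" if "x \<in> S" for x using g that unfolding bij_betw_def by auto
    have "bij_betw f S {1..l+1}" using g fS bij_betw_cong by blast
    then have "bij_betw f (S \<union> {u}) ({1..l+1} \<union> {f u})"
      using uV by (intro notIn_Un_bij_betw) (auto simp: f_def)
    moreover have "{1..l+1} \<union> {f u} = {0..l+1}" by (auto simp: f_def)
    moreover have "S \<union> {u} = V" using Veq by blast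
    ultimately have bf: "bij_betw f V {0..l+1}" by simp
    have edges: "\<forall>x\<in>V. \<forall>y\<in>V. E x y \<longleftrightarrow> star_edge (l+1) (f x) (f y)"
    proof (intro ballI)
      fix x y assume xy: "x \<in> V" "y \<in> V"
      show "E x y \<longleftrightarrow> star_edge (l+1) (f x) (f y)"
      proof (cases "x = u")
        case True
        then show ?thesis
        proof (cases "y = u")
          case True then show ?thesis using \<open>x = u\<close> Eirr unfolding star_edge_def f_def by auto
        next
          case False
          then have "y \<in> S" using xy Veq by blast
          have "g y \<ge> 1" "g y \<le> l + 1" "f y = g y" "f x = 0"
            using grange[OF \<open>y \<in> S\<close>] fS[OF \<open>y \<in> S\<close>] \<open>x = u\<close> by (auto simp: f_def)
          then show ?thesis using \<open>x = u\<close> adj[OF \<open>y \<in> S\<close>] Esym unfolding star_edge_def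
            by auto
        qed
      next
        case False
        then have xS: "x \<in> S" using xy Veq by blast
        show ?thesis
        proof (cases "y = u")
          case True
          have "g x \<ge> 1" "g x \<le> l + 1" "f x = g x" "f y = 0"
            using grange[OF xS] fS[OF xS] True by (auto simp: f_def)
          then show ?thesis using True adj[OF xS] unfolding star_edge_def
            by auto
        next
          case False
          then have "y \<in> S" using xy Veq by blast
          then have "g x \<ge> 1" "g y \<ge> 1" "f x = g x" "f y = g y"
            using grange[OF xS] grange[of y] fS[OF xS] fS[of y] by auto
          then show ?thesis using xS \<open>y \<in> S\<close> indep unfolding star_edge_def by auto
        qed
      qed
    qed
    show ?thesis unfolding graph_iso_def star_vertices_def using bf edges by blast
  qed
  show ?thesis using key dir1 dir2 dir3 by blast
qed

end
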